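(* Let $N\ge n\ge 1$ be integers, let $l_1,\dots,l_N>0$, and let $U=(u_{ij})_{i,j=1}^{2N}$ be a unitary $2N\times 2N$ matrix. Consider the quantum graph $\Gamma_0$ consisting of a single vertex and $N$ finite edges (loops) of lengths $l_1,\dots,l_N$, each emanating from and ending at this vertex; its Hilbert space is $\bigoplus_{j=1}^N L^2([0,l_j])$, and the Hamiltonian $H=H_U$ acts as $-\mathrm{d}^2/\mathrm{d}x^2$ on each edge, with domain consisting of all $(f_1,\dots,f_N)\in\bigoplus_j W^{2,2}([0,l_j])$ satisfying $$(U-I)\Psi+i(U+I)\Psi'=0,$$ where $\Psi=(f_1(0),f_1(l_1),f_2(0),f_2(l_2),\dots,f_N(0),f_N(l_N))^T$ and $\Psi'=(f_1'(0),-f_1'(l_1),\dots,f_N'(0),-f_N'(l_N))^T$. Suppose there is $l_0>0$ such that $l_1,\dots,l_n$ are integer multiples of $l_0$. Let $M_{\mathrm{even}}$ be the $2N\times 2n$ matrix formed by the first $2n$ columns of $U$, except that for each $j\in\{1,\dots,n\}$ the entries in positions $(2j-1,2j)$ and $(2j,2j-1)$ are replaced by $u_{2j-1,2j}-1$ and $u_{2j,2j-1}-1$, respectively. If $\mathrm{rank}\,M_{\mathrm{even}}<2n$, then the spectrum of $H_U$ contains the eigenvalues $\epsilon=4m^2\pi^2/l_0^2$, $m\in\mathbb{N}$, and the multiplicity of these eigenvalues is at least $2n-\mathrm{rank}\,M_{\mathrm{even}}$.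
   Context: The boundary condition at the vertex is the general self-adjoint vertex coupling; $\Psi$ collects the boundary values at both ends of every edge and $\Psi'$ the corresponding outward derivatives, ordered so that entries $2j-1,2j$ refer to the two ends of the $j$-th edge. *)

theory Defs
  imports "HOL-Analysis.Analysis" "Jordan_Normal_Form.Schur_Decomposition" "Jordan_Normal_Form.DL_Rank"
begin

text \<open>Edges are indexed 0-based by j < N; edge j is [0, l j].
  Boundary vectors are indexed 0-based: entries 2j, 2j+1 refer to the two ends of edge j
  (the paper's entries 2j-1, 2j for the 1-based j-th edge).\<close>

definition bvals :: "nat \<Rightarrow> (nat \<Rightarrow> real) \<Rightarrow> (nat \<Rightarrow> real \<Rightarrow> complex) \<Rightarrow> complex vec" where
  "bvals N l f = vec (2*N) (\<lambda>r. if even r then f (r div 2) 0 else f (r div 2) (l (r div 2)))"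

definition bders :: "nat \<Rightarrow> (nat \<Rightarrow> real) \<Rightarrow> (nat \<Rightarrow> real \<Rightarrow> complex) \<Rightarrow> complex vec" where
  "bders N l f' = vec (2*N) (\<lambda>r. if even r then f' (r div 2) 0 else - f' (r div 2) (l (r div 2)))"

definition is_eigenfunction ::
  "nat \<Rightarrow> (nat \<Rightarrow> real) \<Rightarrow> complex mat \<Rightarrow> real \<Rightarrow> (nat \<Rightarrow> real \<Rightarrow> complex) \<Rightarrow> bool" where
  "is_eigenfunction N l U \<epsilon> f \<longleftrightarrow>
     (\<exists>f' f''. (\<forall>j<N. \<forall>x\<in>{0..l j}.
          (f j has_vector_derivative f' j x) (at x within {0..l j}) \<and>
          (f' j has_vector_derivative f'' j x) (at x within {0..l j}) \<and>
          - f'' j x = complex_of_real \<epsilon> * f j x)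
      \<and> (U - 1\<^sub>m (2*N)) *\<^sub>v bvals N l f + \<i> \<cdot>\<^sub>v ((U + 1\<^sub>m (2*N)) *\<^sub>v bders N l f')
          = 0\<^sub>v (2*N))"

definition is_zero_on_graph :: "nat \<Rightarrow> (nat \<Rightarrow> real) \<Rightarrow> (nat \<Rightarrow> real \<Rightarrow> complex) \<Rightarrow> bool" where
  "is_zero_on_graph N l f \<longleftrightarrow> (\<forall>j<N. \<forall>x\<in>{0..l j}. f j x = 0)"

definition is_eigenvalue :: "nat \<Rightarrow> (nat \<Rightarrow> real) \<Rightarrow> complex mat \<Rightarrow> real \<Rightarrow> bool" where
  "is_eigenvalue N l U \<epsilon> \<longleftrightarrow> (\<exists>f. is_eigenfunction N l U \<epsilon> f \<and> \<not> is_zero_on_graph N l f)"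

text \<open>multiplicity (dimension of the eigenspace over \<complex>) is at least k:
  there are k eigenfunctions that are linearly independent as elements of the Hilbert space.\<close>
definition multiplicity_ge :: "nat \<Rightarrow> (nat \<Rightarrow> real) \<Rightarrow> complex mat \<Rightarrow> real \<Rightarrow> nat \<Rightarrow> bool" where
  "multiplicity_ge N l U \<epsilon> k \<longleftrightarrow>
     (\<exists>\<phi> :: nat \<Rightarrow> nat \<Rightarrow> real \<Rightarrow> complex.
        (\<forall>i<k. is_eigenfunction N l U \<epsilon> (\<phi> i)) \<and>
        (\<forall>c :: nat \<Rightarrow> complex.
           is_zero_on_graph N l (\<lambda>j x. \<Sum>i<k. c i * \<phi> i j x) \<longrightarrow> (\<forall>i<k. c i = 0)))"

definition unitary_mat :: "complex mat \<Rightarrow> bool" where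
  "unitary_mat U \<longleftrightarrow> U \<in> carrier_mat (dim_row U) (dim_row U) \<and>
     U * mat_adjoint U = 1\<^sub>m (dim_row U) \<and> mat_adjoint U * U = 1\<^sub>m (dim_row U)"

text \<open>M_even: first 2n columns of U, with entries (2j,2j+1) and (2j+1,2j) (0-based, j<n)
  decreased by 1.\<close>
definition M_even :: "nat \<Rightarrow> nat \<Rightarrow> complex mat \<Rightarrow> complex mat" where
  "M_even N n U = mat (2*N) (2*n) (\<lambda>(r,c).
     if (odd c \<and> r + 1 = c) \<or> (even c \<and> r = c + 1) then U $$ (r,c) - 1 else U $$ (r,c))"

end

theory Submission
  imports Defs "Jordan_Normal_Form.Matrix_Kernel"
begin


lemma kernel_big:
  fixes A :: "complex mat"
  assumes A: "A \<in> carrier_mat nr nc"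
  shows "\<exists>B. finite B \<and> B \<subseteq> mat_kernel A \<and> \<not> module.lin_dep class_ring (module_vec TYPE(complex) nc) B
          \<and> card B \<ge> nc - vec_space.rank nr A"
proof -
  interpret K: kernel nr nc A by (unfold_locales, rule A)
  obtain B where fB: "finite B" and bB: "K.basis B" using kernel_basis_exists[OF A] by blast
  have BK: "B \<subseteq> mat_kernel A" using bB unfolding K.Ker.basis_def by auto
  have dimK: "K.dim = card B" using K.Ker.dim_basis[OF fB bB] .
  have li: "\<not> K.NC.lin_dep B" using bB K.lindep_same[OF BK] unfolding K.Ker.basis_def by auto
  interpret NR: vec_space "TYPE(complex)" nr .
  interpret L: linear_map class_ring "module_vec TYPE(complex) nc" "module_vec TYPE(complex) nr" "\<lambda>v. A *\<^sub>v v"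
  proof (intro linear_map.intro)
    show "vectorspace class_ring (module_vec TYPE(complex) nc)" by (rule K.NC.vectorspace_axioms)
    show "vectorspace class_ring (module_vec TYPE(complex) nr)" by (rule NR.vectorspace_axioms)
    show "mod_hom class_ring (module_vec TYPE(complex) nc) (module_vec TYPE(complex) nr) ((*\<^sub>v) A)"
      apply (rule mod_hom.intro)
        apply (rule K.NC.module_axioms)
       apply (rule NR.module_axioms)
      apply (unfold mod_hom_axioms_def module_hom_def)
      using A by (auto simp: module_vec_simps mult_add_distrib_mat_vec mult_mat_vec)
  qed
  have rn: "vectorspace.dim class_ring (NR.vs L.imT) + vectorspace.dim class_ring (K.NC.vs L.kerT) = nc"
    using L.rank_nullity K.NC.fin_dim K.NC.dim_is_n by simp
  have ker: "L.kerT = mat_kernel A"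
    unfolding mod_hom.ker_def[OF L.mod_hom_axioms] mat_kernel_def using A by (auto simp: module_vec_simps)
  have dk: "vectorspace.dim class_ring (K.NC.vs L.kerT) = K.dim" unfolding ker by simp
  have im1: "L.imT \<subseteq> NR.span (set (cols A))"
  proof
    fix w assume "w \<in> L.imT"
    then obtain v where v: "v \<in> carrier_vec nc" and w: "w = A *\<^sub>v v"
      unfolding mod_hom.im_def[OF L.mod_hom_axioms] by (auto simp: module_vec_simps)
    have "A = mat_of_cols nr (cols A)" using A mat_of_cols_cols[of A] by simp
    hence "w = mat_of_cols nr (cols A) *\<^sub>v v" using w by simp
    also have "\<dots> = NR.lincomb (\<lambda>l. sum (\<lambda> i. if l = cols A ! i then v $ i else 0) {0..<length (cols A)}) (set (cols A))"
      by (rule NR.mat_of_cols_mult_as_finsum) (use v A in auto)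
    also have "\<dots> \<in> NR.span (set (cols A))"
      by (rule NR.in_spanI[OF refl]) auto
    finally show "w \<in> NR.span (set (cols A))" .
  qed
  have im2: "NR.span (set (cols A)) \<subseteq> L.imT"
  proof (rule NR.span_is_subset)
    show "set (cols A) \<subseteq> L.imT"
    proof
      fix c assume "c \<in> set (cols A)"
      then obtain j where j: "j < nc" and c: "c = col A j" using A by (auto simp: cols_def)
      have "c = A *\<^sub>v unit_vec nc j" using A j c by (auto simp: mult_mat_vec_def)
      thus "c \<in> L.imT" unfolding mod_hom.im_def[OF L.mod_hom_axioms] by (auto simp: module_vec_simps)
    qed
    show "submodule class_ring L.imT NR.V" by (rule L.im_is_submodule)
  qed
  have di: "vectorspace.dim class_ring (NR.vs L.imT) = NR.rank A"
  proof -
    have eq: "L.imT = NR.span (set (cols A))" using im1 im2 by (rule subset_antisym)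
    show ?thesis unfolding NR.rank_def eq ..
  qed
  show ?thesis
    by (intro exI[of _ B] conjI fB BK li) (use rn dk di dimK in auto)
qed
lemma kernel_vecs:
  fixes A :: "complex mat"
  assumes A: "A \<in> carrier_mat nr nc"
  shows "\<exists>b. (\<forall>i<nc - vec_space.rank nr A. b i \<in> carrier_vec nc \<and> A *\<^sub>v b i = 0\<^sub>v nr) \<and>
     (\<forall>c. (\<forall>r<nc. (\<Sum>i<nc - vec_space.rank nr A. c i * b i $ r) = 0) \<longrightarrow> (\<forall>i<nc - vec_space.rank nr A. c i = 0))"
proof -
  interpret NC: vec_space "TYPE(complex)" nc .
  define k where "k = nc - vec_space.rank nr A"
  obtain B where fB: "finite B" and BK: "B \<subseteq> mat_kernel A" and li: "NC.lin_indpt B" and cB: "card B \<ge> k"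
    using kernel_big[OF A] unfolding k_def by blast
  obtain B' where B'B: "B' \<subseteq> B" and cB': "card B' = k" using obtain_subset_with_card_n[OF cB] by blast
  have fB': "finite B'" using B'B fB finite_subset by blast
  have li': "NC.lin_indpt B'" using NC.subset_li_is_li[OF li B'B] .
  obtain f where bij: "bij_betw f {0..<k} B'" using ex_bij_betw_nat_finite[OF fB'] cB' by auto
  have B'c: "B' \<subseteq> carrier_vec nc" using B'B BK A by (auto simp: mat_kernel_def)
  show ?thesis unfolding k_def[symmetric]
  proof (intro exI[of _ f] conjI allI impI)
    fix i assume i: "i < k"
    hence fi: "f i \<in> B'" using bij by (auto simp: bij_betw_def)
    show "f i \<in> carrier_vec nc" using fi B'c by auto
    show "A *\<^sub>v f i = 0\<^sub>v nr" using fi B'B BK A by (auto simp: mat_kernel_def)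
  next
    fix c :: "nat \<Rightarrow> complex" and i
    assume z: "\<forall>r<nc. (\<Sum>i<k. c i * f i $ r) = 0" and i: "i < k"
    define a where "a v = c (inv_into {0..<k} f v)" for v
    have lc: "NC.lincomb a B' = 0\<^sub>v nc"
    proof (rule eq_vecI)
      fix r assume "r < dim_vec (0\<^sub>v nc :: complex vec)"
      hence r: "r < nc" by simp
      have "NC.lincomb a B' $ r = (\<Sum>v\<in>B'. a v * v $ r)" by (rule NC.lincomb_index[OF r B'c])
      also have "\<dots> = (\<Sum>i\<in>{0..<k}. a (f i) * f i $ r)"
        by (rule sum.reindex_bij_betw[OF bij, symmetric])
      also have "\<dots> = (\<Sum>i<k. c i * f i $ r)"
        using bij by (auto simp: a_def bij_betw_def lessThan_atLeast0 intro!: sum.cong)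
      finally show "NC.lincomb a B' $ r = 0\<^sub>v nc $ r" using z r by simp
    next
      show "dim_vec (NC.lincomb a B') = dim_vec (0\<^sub>v nc :: complex vec)"
        using NC.lincomb_closed[OF B'c] by (simp add: module_vec_simps)
    qed
    have fi: "f i \<in> B'" using bij i by (auto simp: bij_betw_def)
    have "a (f i) = 0"
    proof (rule ccontr)
      assume "a (f i) \<noteq> 0"
      hence "NC.lin_dep B'" unfolding NC.lin_dep_def using fB' lc fi
        by (intro exI[of _ B'] exI[of _ a] exI[of _ "f i"]) (auto simp: module_vec_simps)
      thus False using li' by simp
    qed
    thus "c i = 0" using bij i by (auto simp: a_def bij_betw_def)
  qed
qed


definition cs :: "complex \<Rightarrow> complex \<Rightarrow> real \<Rightarrow> real \<Rightarrow> complex" where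
  "cs P Q w x = P * of_real (cos (w*x)) + Q * of_real (sin (w*x))"

lemma cs_deriv: "(cs P Q w has_vector_derivative cs (Q * of_real w) (-(P * of_real w)) w x) (at x within S)"
proof -
  have c: "((\<lambda>x. cos (w*x)) has_field_derivative (- sin (w*x) * w)) (at x within S)"
    by (auto intro!: derivative_eq_intros)
  have s: "((\<lambda>x. sin (w*x)) has_field_derivative (cos (w*x) * w)) (at x within S)"
    by (auto intro!: derivative_eq_intros)
  have d: "((\<lambda>x. P * of_real (cos (w*x)) + Q * of_real (sin (w*x))) has_vector_derivative
        (P * of_real (- sin (w*x) * w) + Q * of_real (cos (w*x) * w))) (at x within S)"
    by (intro has_vector_derivative_add has_vector_derivative_mult_right has_vector_derivative_of_real c s)
  show ?thesis unfolding cs_def[abs_def]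
    by (rule has_vector_derivative_eq_rhs[OF d]) (simp add: algebra_simps)
qed

lemma cs0[simp]: "cs P Q w 0 = P" by (simp add: cs_def)

definition swp :: "nat \<Rightarrow> nat" where "swp c = (if even c then c+1 else c-1)"

lemma swp_swp[simp]: "swp (swp c) = c" by (auto simp: swp_def)
lemma swp_eq: "(r = swp c) = (c = swp r)" by (metis swp_swp)
lemma swp_less: "(swp r < 2*n) = (r < 2*n)" unfolding swp_def by presburger

lemma sum_swp: "(\<Sum>c<2*n. if r = swp c then g c else 0) = (if r < 2*n then g (swp r) else (0::complex))"
  unfolding swp_eq by (simp add: swp_less)

definition Aco :: "(nat \<Rightarrow> complex) \<Rightarrow> nat \<Rightarrow> complex" where "Aco g j = (g (2*j) + g (2*j+1)) / 2"
definition Cco :: "(nat \<Rightarrow> complex) \<Rightarrow> nat \<Rightarrow> complex" where "Cco g j = (g (2*j) - g (2*j+1)) / (2*\<i>)"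

definition ef :: "nat \<Rightarrow> real \<Rightarrow> (nat \<Rightarrow> complex) \<Rightarrow> nat \<Rightarrow> real \<Rightarrow> complex" where
  "ef n w g j = (if j < n then cs (Aco g j) (Cco g j / of_real w) w else (\<lambda>x. 0))"
definition ef1 :: "nat \<Rightarrow> real \<Rightarrow> (nat \<Rightarrow> complex) \<Rightarrow> nat \<Rightarrow> real \<Rightarrow> complex" where
  "ef1 n w g j = (if j < n then cs (Cco g j) (-(Aco g j * of_real w)) w else (\<lambda>x. 0))"
definition ef2 :: "nat \<Rightarrow> real \<Rightarrow> (nat \<Rightarrow> complex) \<Rightarrow> nat \<Rightarrow> real \<Rightarrow> complex" where
  "ef2 n w g j = (if j < n then cs (-(Aco g j * of_real w) * of_real w) (-(Cco g j * of_real w)) w else (\<lambda>x. 0))"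

lemma ef_deriv:
  assumes "w \<noteq> 0"
  shows "(ef n w g j has_vector_derivative ef1 n w g j x) (at x within S)"
    "(ef1 n w g j has_vector_derivative ef2 n w g j x) (at x within S)"
    "- ef2 n w g j x = complex_of_real (w^2) * ef n w g j x"
proof -
  show "(ef n w g j has_vector_derivative ef1 n w g j x) (at x within S)"
  proof (cases "j < n")
    case True
    have "Cco g j / complex_of_real w * complex_of_real w = Cco g j" using assms by simp
    thus ?thesis using True cs_deriv[of "Aco g j" "Cco g j / of_real w" w x S] by (simp add: ef_def ef1_def)
  qed (simp add: ef_def ef1_def)
  show "(ef1 n w g j has_vector_derivative ef2 n w g j x) (at x within S)"
    using cs_deriv[of "Cco g j" "-(Aco g j * of_real w)" w x S] by (simp add: ef1_def ef2_def)
  show "- ef2 n w g j x = complex_of_real (w^2) * ef n w g j x"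
    using assms by (simp add: ef_def ef2_def cs_def field_simps power2_eq_square)
qed

lemma M_even_idx:
  assumes "r < 2*N" "c < 2*n"
  shows "M_even N n U $$ (r,c) = U $$ (r,c) - (if r = swp c then 1 else 0)"
proof -
  have "((odd c \<and> r + 1 = c) \<or> (even c \<and> r = c + 1)) = (r = swp c)"
    unfolding swp_def by presburger
  thus ?thesis using assms by (simp add: M_even_def)
qed

lemma eig:
  assumes w: "w \<noteq> 0" and nN: "n \<le> N" and U: "U \<in> carrier_mat (2*N) (2*N)"
    and per: "\<forall>j<n. cos (w * l j) = 1 \<and> sin (w * l j) = 0"
    and ker: "\<forall>r<2*N. (\<Sum>c<2*n. M_even N n U $$ (r,c) * g c) = 0"
  shows "is_eigenfunction N l U (w^2) (ef n w g)"
  unfolding is_eigenfunction_def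
proof (rule exI[of _ "ef1 n w g"], rule exI[of _ "ef2 n w g"], intro conjI allI impI ballI)
  fix j x
  show "(ef n w g j has_vector_derivative ef1 n w g j x) (at x within {0..l j})"
       "(ef1 n w g j has_vector_derivative ef2 n w g j x) (at x within {0..l j})"
       "- ef2 n w g j x = complex_of_real (w^2) * ef n w g j x"
    using ef_deriv[OF w] by auto
next
  have csl: "cs P Q w (l j) = P" if "j < n" for P Q j using per that by (simp add: cs_def)
  have bv: "bvals N l (ef n w g) = vec (2*N) (\<lambda>r. if r < 2*n then Aco g (r div 2) else 0)"
    unfolding bvals_def by (rule eq_vecI) (auto simp: ef_def csl)
  have bd: "bders N l (ef1 n w g) = vec (2*N) (\<lambda>r. if r < 2*n then (if even r then Cco g (r div 2) else - Cco g (r div 2)) else 0)"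
    unfolding bders_def by (rule eq_vecI) (auto simp: ef1_def csl)
  show "(U - 1\<^sub>m (2*N)) *\<^sub>v bvals N l (ef n w g) + \<i> \<cdot>\<^sub>v ((U + 1\<^sub>m (2*N)) *\<^sub>v bders N l (ef1 n w g)) = 0\<^sub>v (2*N)"
  proof (rule eq_vecI)
    fix r assume "r < dim_vec (0\<^sub>v (2 * N) :: complex vec)"
    hence r: "r < 2*N" by simp
    define P where "P c = (if c < 2*n then Aco g (c div 2) else 0)" for c
    define D where "D c = (if c < 2*n then (if even c then Cco g (c div 2) else - Cco g (c div 2)) else 0)" for c
    have "((U - 1\<^sub>m (2*N)) *\<^sub>v bvals N l (ef n w g) + \<i> \<cdot>\<^sub>v ((U + 1\<^sub>m (2*N)) *\<^sub>v bders N l (ef1 n w g))) $ r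
      = (\<Sum>c<2*N. (U $$ (r,c) - (if r = c then 1 else 0)) * P c) + \<i> * (\<Sum>c<2*N. (U $$ (r,c) + (if c = r then 1 else 0)) * D c)"
      unfolding bv bd using U r by (simp add: scalar_prod_def P_def D_def lessThan_atLeast0)
    also have "\<dots> = (\<Sum>c<2*N. (U $$ (r,c) - (if r = c then 1 else 0)) * P c + \<i> * ((U $$ (r,c) + (if c = r then 1 else 0)) * D c))"
      by (simp only: sum_distrib_left sum.distrib)
    also have "\<dots> = (\<Sum>c<2*N. U $$ (r,c) * (P c + \<i> * D c) - (if c = r then P c - \<i> * D c else 0))"
      by (rule sum.cong) (auto simp: algebra_simps)
    also have "\<dots> = (\<Sum>c<2*N. U $$ (r,c) * (P c + \<i> * D c)) - (P r - \<i> * D r)"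
      using r by (simp add: sum_subtractf)
    also have "\<dots> = (\<Sum>c<2*n. U $$ (r,c) * g c) - (if r < 2*n then g (swp r) else 0)"
    proof -
      have pd: "P c + \<i> * D c = (if c < 2*n then g c else 0)" for c
      proof (cases "c < 2*n")
        case True
        show ?thesis
        proof (cases "even c")
          case True
          then obtain j where "c = 2*j" by blast
          thus ?thesis using \<open>c < 2*n\<close> by (simp add: P_def D_def Aco_def Cco_def field_simps)
        next
          case False
          then obtain j where "c = 2*j+1" using oddE by blast
          thus ?thesis using \<open>c < 2*n\<close> by (simp add: P_def D_def Aco_def Cco_def field_simps)
        qed
      qed (simp add: P_def D_def)
      have pm: "P r - \<i> * D r = (if r < 2*n then g (swp r) else 0)"
      proof (cases "r < 2*n")
        case True
        show ?thesis
        proof (cases "even r")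
          case True
          then obtain j where "r = 2*j" by blast
          thus ?thesis using \<open>r < 2*n\<close> by (simp add: P_def D_def Aco_def Cco_def swp_def field_simps)
        next
          case False
          then obtain j where "r = 2*j+1" using oddE by blast
          thus ?thesis using \<open>r < 2*n\<close> by (simp add: P_def D_def Aco_def Cco_def swp_def field_simps)
        qed
      qed (simp add: P_def D_def)
      have "(\<Sum>c<2*N. U $$ (r,c) * (P c + \<i> * D c)) = (\<Sum>c<2*N. if c < 2*n then U $$ (r,c) * g c else 0)"
        unfolding pd by (simp add: if_distrib cong: if_cong)
      also have "\<dots> = (\<Sum>c<2*n. U $$ (r,c) * g c)"
        using nN by (subst sum.mono_neutral_right[of "{..<2*N}" "{..<2*n}"]) auto
      finally show ?thesis using pm by simp
    qed
    also have "\<dots> = (\<Sum>c<2*n. M_even N n U $$ (r,c) * g c)"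
    proof -
      have "(\<Sum>c<2*n. M_even N n U $$ (r,c) * g c) = (\<Sum>c<2*n. U $$ (r,c) * g c - (if r = swp c then g c else 0))"
        using r by (intro sum.cong refl) (simp add: M_even_idx algebra_simps)
      also have "\<dots> = (\<Sum>c<2*n. U $$ (r,c) * g c) - (if r < 2*n then g (swp r) else 0)"
        by (simp add: sum_subtractf sum_swp)
      finally show ?thesis by simp
    qed
    also have "\<dots> = 0" using ker r by simp
    finally show "((U - 1\<^sub>m (2*N)) *\<^sub>v bvals N l (ef n w g) + \<i> \<cdot>\<^sub>v ((U + 1\<^sub>m (2*N)) *\<^sub>v bders N l (ef1 n w g))) $ r = 0\<^sub>v (2*N) $ r"
      using r by simp
  qed (use U in auto)
qed



lemma cs_lin: "(\<Sum>i\<in>I. c i * cs (P i) (Q i) w x) = cs (\<Sum>i\<in>I. c i * P i) (\<Sum>i\<in>I. c i * Q i) w x"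
proof -
  have "(\<Sum>i\<in>I. c i * cs (P i) (Q i) w x) = (\<Sum>i\<in>I. c i * P i * of_real (cos (w*x)) + c i * Q i * of_real (sin (w*x)))"
    unfolding cs_def by (rule sum.cong) (simp_all add: algebra_simps)
  also have "\<dots> = cs (\<Sum>i\<in>I. c i * P i) (\<Sum>i\<in>I. c i * Q i) w x"
    unfolding cs_def by (simp only: sum.distrib sum_distrib_right)
  finally show ?thesis .
qed

lemma Aco_lin: "Aco (\<lambda>r. \<Sum>i\<in>I. c i * g i r) j = (\<Sum>i\<in>I. c i * Aco (g i) j)"
proof -
  have "Aco (\<lambda>r. \<Sum>i\<in>I. c i * g i r) j = (\<Sum>i\<in>I. (c i * g i (2*j) + c i * g i (2*j+1)) / 2)"
    unfolding Aco_def by (simp only: sum.distrib[symmetric] sum_divide_distrib)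
  also have "\<dots> = (\<Sum>i\<in>I. c i * Aco (g i) j)"
    unfolding Aco_def by (rule sum.cong) (simp_all add: algebra_simps)
  finally show ?thesis .
qed

lemma Cco_lin: "Cco (\<lambda>r. \<Sum>i\<in>I. c i * g i r) j = (\<Sum>i\<in>I. c i * Cco (g i) j)"
proof -
  have "Cco (\<lambda>r. \<Sum>i\<in>I. c i * g i r) j = (\<Sum>i\<in>I. (c i * g i (2*j) - c i * g i (2*j+1)) / (2*\<i>))"
    unfolding Cco_def by (simp only: sum_subtractf[symmetric] sum_divide_distrib)
  also have "\<dots> = (\<Sum>i\<in>I. c i * Cco (g i) j)"
    unfolding Cco_def by (rule sum.cong) (simp_all add: algebra_simps)
  finally show ?thesis .
qed

lemma ef_lin: "(\<Sum>i\<in>I. c i * ef n w (g i) j x) = ef n w (\<lambda>r. \<Sum>i\<in>I. c i * g i r) j x"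
proof (cases "j < n")
  case True
  have "(\<Sum>i\<in>I. c i * ef n w (g i) j x) = (\<Sum>i\<in>I. c i * cs (Aco (g i) j) (Cco (g i) j / of_real w) w x)"
    using True by (simp add: ef_def)
  also have "\<dots> = cs (\<Sum>i\<in>I. c i * Aco (g i) j) (\<Sum>i\<in>I. c i * (Cco (g i) j / of_real w)) w x"
    by (rule cs_lin)
  also have "\<dots> = ef n w (\<lambda>r. \<Sum>i\<in>I. c i * g i r) j x"
    using True by (simp add: ef_def Aco_lin Cco_lin sum_divide_distrib)
  finally show ?thesis .
qed (simp add: ef_def)



theorem theorem1:
  fixes N n :: nat and l :: "nat \<Rightarrow> real" and U :: "complex mat" and l0 :: real
  assumes "1 \<le> n" and "n \<le> N"
    and "\<forall>j<N. l j > 0"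
    and "U \<in> carrier_mat (2*N) (2*N)" and "unitary_mat U"
    and "l0 > 0" and "\<forall>j<n. \<exists>p::nat. l j = real p * l0"
    and "vec_space.rank (2*N) (M_even N n U) < 2*n"
  shows "\<forall>m::nat. m \<ge> 1 \<longrightarrow>
           is_eigenvalue N l U (4 * (real m)^2 * pi^2 / l0^2) \<and>
           multiplicity_ge N l U (4 * (real m)^2 * pi^2 / l0^2)
             (2*n - vec_space.rank (2*N) (M_even N n U))"
proof (intro allI impI)
  fix m :: nat assume m: "m \<ge> 1"
  note nN = assms(2) and lpos = assms(3) and U = assms(4) and l0 = assms(6) and lp = assms(7) and rk = assms(8)
  define w where "w = 2 * real m * pi / l0"
  have w0: "w \<noteq> 0" "w > 0" using m l0 by (auto simp: w_def)
  have eps: "4 * (real m)^2 * pi^2 / l0^2 = w^2" by (simp add: w_def power2_eq_square)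
  have per: "\<forall>j<n. cos (w * l j) = 1 \<and> sin (w * l j) = 0"
  proof (intro allI impI)
    fix j assume "j < n"
    then obtain p :: nat where p: "l j = real p * l0" using lp by blast
    have "w * l j = 2 * real (m*p) * pi" using l0 by (simp add: w_def p)
    thus "cos (w * l j) = 1 \<and> sin (w * l j) = 0" by (metis cos_2npi sin_2npi)
  qed
  define M where "M = M_even N n U"
  have Mc: "M \<in> carrier_mat (2*N) (2*n)" by (simp add: M_def M_even_def)
  define k where "k = 2*n - vec_space.rank (2*N) M"
  obtain b where bk: "\<forall>i<k. b i \<in> carrier_vec (2*n) \<and> M *\<^sub>v b i = 0\<^sub>v (2*N)"
    and bi: "\<forall>c. (\<forall>r<2*n. (\<Sum>i<k. c i * b i $ r) = 0) \<longrightarrow> (\<forall>i<k. c i = 0)"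
    using kernel_vecs[OF Mc] unfolding k_def by blast
  define \<phi> where "\<phi> i = ef n w (\<lambda>r. b i $ r)" for i
  have eigf: "is_eigenfunction N l U (w^2) (\<phi> i)" if i: "i < k" for i
    unfolding \<phi>_def
  proof (rule eig[OF w0(1) nN U per])
    show "\<forall>r<2*N. (\<Sum>c<2*n. M_even N n U $$ (r,c) * b i $ c) = 0"
    proof (intro allI impI)
      fix r assume r: "r < 2*N"
      have bc: "b i \<in> carrier_vec (2*n)" and z: "M *\<^sub>v b i = 0\<^sub>v (2*N)" using bk i by auto
      have "(M *\<^sub>v b i) $ r = (\<Sum>c<2*n. M $$ (r,c) * b i $ c)"
        using Mc bc r by (simp add: scalar_prod_def lessThan_atLeast0 mult.commute)
      thus "(\<Sum>c<2*n. M_even N n U $$ (r,c) * b i $ c) = 0" using z r by (simp add: M_def)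
    qed
  qed
  have indep: "\<forall>i<k. c i = 0" if z: "is_zero_on_graph N l (\<lambda>j x. \<Sum>i<k. c i * \<phi> i j x)" for c
  proof -
    define s where "s r = (\<Sum>i<k. c i * b i $ r)" for r
    have zs: "ef n w s j x = 0" if "j < N" "x \<in> {0..l j}" for j x
      using z that unfolding is_zero_on_graph_def \<phi>_def s_def ef_lin by simp
    have sz: "s r = 0" if r: "r < 2*n" for r
    proof -
      define j where "j = r div 2"
      have jn: "j < n" using r by (simp add: j_def)
      have jN: "j < N" using jn nN by simp
      have lj: "l j > 0" using lpos jN by simp
      have a0: "Aco s j = 0" using zs[OF jN, of 0] lj jn by (simp add: ef_def)
      obtain p :: nat where p: "l j = real p * l0" using lp jn by blast
      have p1: "p \<ge> 1" using lj l0 p by (cases p) auto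
      define x0 where "x0 = l0 / (4 * real m)"
      have x0in: "x0 \<in> {0..l j}"
      proof -
        have "x0 \<le> l0" using l0 m by (simp add: x0_def field_simps)
        also have "l0 \<le> l j" using p p1 l0 by (simp add: mult_le_cancel_right1)
        finally show ?thesis using l0 m by (simp add: x0_def)
      qed
      have wx: "w * x0 = pi / 2" using l0 m by (simp add: w_def x0_def field_simps)
      have "Cco s j / of_real w = 0" using zs[OF jN x0in] jn wx a0 by (simp add: ef_def cs_def)
      hence c0: "Cco s j = 0" using w0 by simp
      have "s (2*j) = 0" "s (2*j+1) = 0" using a0 c0 by (auto simp: Aco_def Cco_def)
      moreover have "r = 2*j \<or> r = 2*j+1" by (simp add: j_def) presburger
      ultimately show ?thesis by auto
    qed
    show ?thesis using bi sz unfolding s_def by blast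
  qed
  have k1: "k \<ge> 1" using rk by (simp add: k_def M_def)
  have mult: "multiplicity_ge N l U (w^2) k"
    unfolding multiplicity_ge_def using eigf indep by blast
  have ev: "is_eigenvalue N l U (w^2)"
    unfolding is_eigenvalue_def
  proof (intro exI conjI)
    show "is_eigenfunction N l U (w^2) (\<phi> 0)" using eigf k1 by simp
    show "\<not> is_zero_on_graph N l (\<phi> 0)"
    proof
      assume z: "is_zero_on_graph N l (\<phi> 0)"
      have e: "(\<lambda>j x. \<Sum>i<k. (if i = 0 then 1 else 0) * \<phi> i j x) = \<phi> 0"
      proof (intro ext)
        fix j x
        have "(\<Sum>i<k. (if i = 0 then 1 else 0) * \<phi> i j x) = (\<Sum>i<k. if i = 0 then \<phi> 0 j x else 0)"
          by (rule sum.cong) auto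
        also have "\<dots> = \<phi> 0 j x" using k1 by simp
        finally show "(\<Sum>i<k. (if i = 0 then 1 else 0) * \<phi> i j x) = \<phi> 0 j x" .
      qed
      have "is_zero_on_graph N l (\<lambda>j x. \<Sum>i<k. (if i = 0 then 1 else 0) * \<phi> i j x)"
        unfolding e by (rule z)
      hence "\<forall>i<k. (if i = 0 then 1 else (0::complex)) = 0" by (rule indep)
      thus False using k1 by auto
    qed
  qed
  show "is_eigenvalue N l U (4 * (real m)^2 * pi^2 / l0^2) \<and>
           multiplicity_ge N l U (4 * (real m)^2 * pi^2 / l0^2) (2*n - vec_space.rank (2*N) (M_even N n U))"
    using ev mult unfolding eps k_def M_def by simp
qed


end
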